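(* For every $n\ge1$ and $t\in(0,1)$, with notation as in the context, \begin{align*} \beta_nR_nR_{n-1}&=r_n^2+\beta r_n,\\ \beta_nx_nx_{n-1}&=y_n^2-\alpha y_n,\\ \beta_n(R_nx_{n-1}+x_nR_{n-1})&=2r_ny_n+(2n+\beta+\gamma)r_n-(2n+\alpha+\gamma)y_n-n(n+\gamma). \end{align*}
   Context: Fix $\alpha,\beta,\gamma>0$ and real constants $A,B$ with $A\ge0$, $A+B\ge0$, not both $A$ and $A+B$ equal to $0$. Let $\theta$ be the Heaviside function ($\theta(x)=1$ for $x>0$, $0$ otherwise). For $t\in(0,1)$ put $w(x)=x^{\alpha}(1-x)^{\beta}|x-t|^{\gamma}(A+B\theta(x-t))$ on $[0,1]$. Let $P_n$ be the monic orthogonal polynomials w.r.t. $w$ on $[0,1]$, $\int_0^1P_mP_nw\,dx=h_n\delta_{mn}$, with recurrence $xP_n=P_{n+1}+\alpha_nP_n+\beta_nP_{n-1}$, $P_0=1$, $\beta_0P_{-1}=0$. Define $x_n=\frac{\alpha}{h_n}\int_0^1\frac{P_n^2w}{y}dy$, $R_n=\frac{\beta}{h_n}\int_0^1\frac{P_n^2w}{1-y}dy$, $y_n=\frac{\alpha}{h_{n-1}}\int_0^1\frac{P_nP_{n-1}w}{y}dy$, $r_n=\frac{\beta}{h_{n-1}}\int_0^1\frac{P_nP_{n-1}w}{1-y}dy$ ($n\ge1$). *)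

theory Defs
  imports "HOL-Analysis.Analysis" "HOL-Computational_Algebra.Polynomial"
begin

definition heaviside :: "real \<Rightarrow> real" where
  "heaviside x = (if x > 0 then 1 else 0)"

definition weight :: "real \<Rightarrow> real \<Rightarrow> real \<Rightarrow> real \<Rightarrow> real \<Rightarrow> real \<Rightarrow> real \<Rightarrow> real" where
  "weight al be ga A B t x =
     x powr al * (1 - x) powr be * \<bar>x - t\<bar> powr ga * (A + B * heaviside (x - t))"

definition int01 :: "(real \<Rightarrow> real) \<Rightarrow> real" where
  "int01 f = (LINT y:{0..1}|lborel. f y)"

definition monic_orthogonal :: "(real \<Rightarrow> real) \<Rightarrow> (nat \<Rightarrow> real poly) \<Rightarrow> bool" where
  "monic_orthogonal w P \<longleftrightarrow>
     (\<forall>n. degree (P n) = n \<and> lead_coeff (P n) = 1) \<and>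
     (\<forall>m n. m \<noteq> n \<longrightarrow> int01 (\<lambda>y. poly (P m) y * poly (P n) y * w y) = 0)"

definition hnorm :: "(real \<Rightarrow> real) \<Rightarrow> (nat \<Rightarrow> real poly) \<Rightarrow> nat \<Rightarrow> real" where
  "hnorm w P n = int01 (\<lambda>y. (poly (P n) y)^2 * w y)"

definition xseq :: "real \<Rightarrow> (real \<Rightarrow> real) \<Rightarrow> (nat \<Rightarrow> real poly) \<Rightarrow> nat \<Rightarrow> real" where
  "xseq al w P n = al / hnorm w P n * int01 (\<lambda>y. (poly (P n) y)^2 * w y / y)"

definition Rseq :: "real \<Rightarrow> (real \<Rightarrow> real) \<Rightarrow> (nat \<Rightarrow> real poly) \<Rightarrow> nat \<Rightarrow> real" where
  "Rseq be w P n = be / hnorm w P n * int01 (\<lambda>y. (poly (P n) y)^2 * w y / (1 - y))"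

text \<open>For n \<ge> 1.\<close>
definition yseq :: "real \<Rightarrow> (real \<Rightarrow> real) \<Rightarrow> (nat \<Rightarrow> real poly) \<Rightarrow> nat \<Rightarrow> real" where
  "yseq al w P n = al / hnorm w P (n - 1) *
     int01 (\<lambda>y. poly (P n) y * poly (P (n - 1)) y * w y / y)"

definition rseq :: "real \<Rightarrow> (real \<Rightarrow> real) \<Rightarrow> (nat \<Rightarrow> real poly) \<Rightarrow> nat \<Rightarrow> real" where
  "rseq be w P n = be / hnorm w P (n - 1) *
     int01 (\<lambda>y. poly (P n) y * poly (P (n - 1)) y * w y / (1 - y))"

end

theory Submission
  imports Defs
begin


lemma powr_abs_integrable:
  fixes e s :: real
  assumes e: "e > -1" and s: "0 \<le> s" "s \<le> 1"
  shows "(\<lambda>y. \<bar>y - s\<bar> powr e) integrable_on {0..1}"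
proof (rule Henstock_Kurzweil_Integration.integrable_combine[OF s])
  have "((\<lambda>y. \<bar>y - s\<bar> powr e) has_integral
      ((\<lambda>y. - ((s - y) powr (e+1) / (e+1))) s - (\<lambda>y. - ((s - y) powr (e+1) / (e+1))) 0)) {0..s}"
  proof (rule fundamental_theorem_of_calculus_interior[OF s(1)])
    show "continuous_on {0..s} (\<lambda>y. - ((s - y) powr (e+1) / (e+1)))"
      using e by (intro continuous_intros continuous_on_powr') auto
    fix y assume y: "y \<in> {0<..<s}"
    have "((\<lambda>y. - ((s - y) powr (e+1) / (e+1))) has_real_derivative
          - ((e+1) * (s - y) powr (e + 1 - 1) * (0 - 1) / (e+1))) (at y)"
      using y e by (intro derivative_eq_intros) auto
    moreover have "- ((e+1) * (s - y) powr (e + 1 - 1) * (0 - 1) / (e+1)) = \<bar>y - s\<bar> powr e"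
      using y e by (auto simp add: abs_if)
    ultimately show "((\<lambda>y. - ((s - y) powr (e+1) / (e+1))) has_vector_derivative \<bar>y - s\<bar> powr e) (at y)"
      by (simp add: has_real_derivative_iff_has_vector_derivative)
  qed
  then show "(\<lambda>y. \<bar>y - s\<bar> powr e) integrable_on {0..s}" by (auto simp: integrable_on_def)
next
  have "((\<lambda>y. \<bar>y - s\<bar> powr e) has_integral
      ((\<lambda>y. (y - s) powr (e+1) / (e+1)) 1 - (\<lambda>y. (y - s) powr (e+1) / (e+1)) s)) {s..1}"
  proof (rule fundamental_theorem_of_calculus_interior[OF s(2)])
    show "continuous_on {s..1} (\<lambda>y. (y - s) powr (e+1) / (e+1))"
      using e by (intro continuous_intros continuous_on_powr') auto
    fix y assume y: "y \<in> {s<..<1}"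
    have "((\<lambda>y. (y - s) powr (e+1) / (e+1)) has_real_derivative
          ((e+1) * (y - s) powr (e + 1 - 1) * (1 - 0) / (e+1))) (at y)"
      using y e by (intro derivative_eq_intros) auto
    moreover have "((e+1) * (y - s) powr (e + 1 - 1) * (1 - 0) / (e+1)) = \<bar>y - s\<bar> powr e"
      using y e by (auto simp add: abs_if)
    ultimately show "((\<lambda>y. (y - s) powr (e+1) / (e+1)) has_vector_derivative \<bar>y - s\<bar> powr e) (at y)"
      by (simp add: has_real_derivative_iff_has_vector_derivative)
  qed
  then show "(\<lambda>y. \<bar>y - s\<bar> powr e) integrable_on {s..1}" by (auto simp: integrable_on_def)
qed

lemma int01_eq:
  assumes m: "g \<in> borel_measurable borel" and i: "g absolutely_integrable_on {0..1}"
  shows "int01 g = integral {0..1} g"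
proof -
  have "integrable lebesgue (\<lambda>x. indicat_real {0..1} x *\<^sub>R g x)"
    using i by (simp add: set_integrable_def)
  then have "integrable lborel (\<lambda>x. indicat_real {0..1} x *\<^sub>R g x)"
    by (subst (asm) integrable_completion) (use m in measurable)
  then have "set_integrable lborel {0..1} g" by (simp add: set_integrable_def)
  then show ?thesis unfolding int01_def by (rule set_borel_integral_eq_integral)
qed

lemma borel_lebesgue_on: "f \<in> borel_measurable borel \<Longrightarrow> f \<in> borel_measurable (lebesgue_on S)" for f :: "real \<Rightarrow> real"
  by (simp add: measurable_completion measurable_restrict_space1)

lemma poly_bounded01: obtains M :: real where "M \<ge> 0" "\<And>y. y \<in> {0..1} \<Longrightarrow> \<bar>poly p y\<bar> \<le> M"
proof -
  have "compact (poly p ` {0..1::real})"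
    by (intro compact_continuous_image continuous_intros) auto
  then obtain M where "\<forall>z\<in>poly p ` {0..1::real}. norm z \<le> M"
    using compact_imp_bounded bounded_iff by metis
  then show ?thesis using that[of "max M 0"] by force
qed

lemma powr_div_self: "(x::real) \<noteq> 0 \<Longrightarrow> \<bar>x\<bar> powr e / \<bar>x\<bar> = \<bar>x\<bar> powr (e - 1)"
proof -
  assume "x \<noteq> 0"
  have "\<bar>x\<bar> powr (e - 1) = \<bar>x\<bar> powr e / \<bar>x\<bar> powr 1" by (rule powr_diff[of "\<bar>x\<bar>" e 1])
  then show ?thesis using \<open>x \<noteq> 0\<close> by simp
qed

lemma poly_meas[measurable]: "(\<lambda>x. poly p x) \<in> borel_measurable (borel :: real measure)"
  by (intro borel_measurable_continuous_onI continuous_intros)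

lemma minus_meas[measurable]: "(\<lambda>x::real. x - s) \<in> borel_measurable borel"
  by simp

locale setting =
  fixes al be ga A B t :: real
  assumes al: "al > 0" and be: "be > 0" and ga: "ga > 0"
    and A: "A \<ge> 0" and AB: "A + B \<ge> 0" and nz: "\<not> (A = 0 \<and> A + B = 0)"
    and t0: "0 < t" and t1: "t < 1"
begin

abbreviation w where "w \<equiv> weight al be ga A B t"

definition C where "C = A + \<bar>B\<bar>"

lemma w_meas: "w \<in> borel_measurable borel"
  unfolding weight_def heaviside_def by measurable

lemma heav_cases: "heaviside x = 0 \<or> heaviside x = 1"
  by (simp add: heaviside_def)

lemma fac_nonneg: "0 \<le> A + B * heaviside x"
  using heav_cases[of x] A AB by auto

lemma fac_bound: "\<bar>A + B * heaviside x\<bar> \<le> C"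
  using heav_cases[of x] A AB by (auto simp: C_def)

lemma w_nonneg: "0 \<le> w y"
  unfolding weight_def using fac_nonneg by simp

lemma w_zero: "w 0 = 0" "w 1 = 0" "w t = 0"
  unfolding weight_def using al be ga by auto

lemma w_bound: assumes "y \<in> {0..1}" shows "\<bar>w y\<bar> \<le> C"
proof -
  have "\<bar>w y\<bar> = y powr al * (1 - y) powr be * \<bar>y - t\<bar> powr ga * \<bar>A + B * heaviside (y - t)\<bar>"
    unfolding weight_def by (simp add: abs_mult)
  also have "\<dots> \<le> 1 * 1 * 1 * C"
    using assms t0 t1 al be ga
    by (intro mult_mono powr_le1 fac_bound) auto
  finally show ?thesis by simp
qed


lemma w_sing0: assumes "y \<in> {0..1}" shows "\<bar>w y / (y - 0)\<bar> \<le> C * \<bar>y - 0\<bar> powr (al - 1)"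
proof (cases "y = 0")
  case True then show ?thesis by simp
next
  case False
  have "\<bar>w y / (y - 0)\<bar> = (\<bar>y\<bar> powr al / \<bar>y\<bar>) * ((1 - y) powr be * \<bar>y - t\<bar> powr ga * \<bar>A + B * heaviside (y - t)\<bar>)"
    unfolding weight_def using assms by (simp add: abs_mult)
  also have "\<dots> = \<bar>y\<bar> powr (al - 1) * ((1 - y) powr be * \<bar>y - t\<bar> powr ga * \<bar>A + B * heaviside (y - t)\<bar>)"
    by (subst powr_div_self[symmetric]) (use False in auto)
  also have "\<dots> \<le> \<bar>y\<bar> powr (al - 1) * (1 * 1 * C)"
    using assms t0 t1 al be ga
    by (intro mult_left_mono mult_mono powr_le1 fac_bound) auto
  finally show ?thesis by (simp add: mult.commute)
qed

lemma w_sing1: assumes "y \<in> {0..1}" shows "\<bar>w y / (y - 1)\<bar> \<le> C * \<bar>y - 1\<bar> powr (be - 1)"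
proof (cases "y = 1")
  case True then show ?thesis by simp
next
  case False
  have "\<bar>w y / (y - 1)\<bar> = (\<bar>y - 1\<bar> powr be / \<bar>y - 1\<bar>) * (y powr al * \<bar>y - t\<bar> powr ga * \<bar>A + B * heaviside (y - t)\<bar>)"
    unfolding weight_def using assms by (simp add: abs_mult abs_minus_commute)
  also have "\<dots> = \<bar>y - 1\<bar> powr (be - 1) * (y powr al * \<bar>y - t\<bar> powr ga * \<bar>A + B * heaviside (y - t)\<bar>)"
    by (subst powr_div_self[symmetric]) (use False in auto)
  also have "\<dots> \<le> \<bar>y - 1\<bar> powr (be - 1) * (1 * 1 * C)"
    using assms t0 t1 al be ga
    by (intro mult_left_mono mult_mono powr_le1 fac_bound) auto
  finally show ?thesis by (simp add: mult.commute)
qed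

lemma w_singt: assumes "y \<in> {0..1}" shows "\<bar>w y / (y - t)\<bar> \<le> C * \<bar>y - t\<bar> powr (ga - 1)"
proof (cases "y = t")
  case True then show ?thesis by simp
next
  case False
  have "\<bar>w y / (y - t)\<bar> = (\<bar>y - t\<bar> powr ga / \<bar>y - t\<bar>) * (y powr al * (1 - y) powr be * \<bar>A + B * heaviside (y - t)\<bar>)"
    unfolding weight_def using assms by (simp add: abs_mult)
  also have "\<dots> = \<bar>y - t\<bar> powr (ga - 1) * (y powr al * (1 - y) powr be * \<bar>A + B * heaviside (y - t)\<bar>)"
    by (subst powr_div_self[symmetric]) (use False in auto)
  also have "\<dots> \<le> \<bar>y - t\<bar> powr (ga - 1) * (1 * 1 * C)"
    using assms t0 t1 al be ga
    by (intro mult_left_mono mult_mono powr_le1 fac_bound) auto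
  finally show ?thesis by (simp add: mult.commute)
qed

lemma ai_sing:
  assumes s: "(s = 0 \<and> e = al) \<or> (s = 1 \<and> e = be) \<or> (s = t \<and> e = ga)"
  shows "(\<lambda>y. poly p y * w y / (y - s)) absolutely_integrable_on {0..1}"
proof -
  obtain M where M: "M \<ge> 0" "\<And>y. y \<in> {0..1} \<Longrightarrow> \<bar>poly p y\<bar> \<le> M" using poly_bounded01 by blast
  have e: "e > 0" "0 \<le> s" "s \<le> 1" using s al be ga t0 t1 by auto
  have sb: "\<And>y. y \<in> {0..1} \<Longrightarrow> \<bar>w y / (y - s)\<bar> \<le> C * \<bar>y - s\<bar> powr (e - 1)"
    using s w_sing0 w_sing1 w_singt by auto
  show ?thesis
  proof (rule measurable_bounded_by_integrable_imp_absolutely_integrable)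
    show "(\<lambda>y. poly p y * w y / (y - s)) \<in> borel_measurable (lebesgue_on {0..1})"
      unfolding weight_def heaviside_def by (rule borel_lebesgue_on) measurable
    show "(\<lambda>y. M * (C * \<bar>y - s\<bar> powr (e - 1))) integrable_on {0..1}"
    proof -
      have "(\<lambda>y. (M*C) *\<^sub>R \<bar>y - s\<bar> powr (e - 1)) integrable_on {0..1}"
        by (intro integrable_cmul powr_abs_integrable) (use e in auto)
      then show ?thesis by (simp add: mult.assoc)
    qed
    fix y :: real assume y: "y \<in> {0..1}"
    have "norm (poly p y * w y / (y - s)) = \<bar>poly p y\<bar> * \<bar>w y / (y - s)\<bar>" by (simp add: abs_mult)
    also have "\<dots> \<le> M * (C * \<bar>y - s\<bar> powr (e - 1))"
      using M y sb by (intro mult_mono) auto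
    finally show "norm (poly p y * w y / (y - s)) \<le> M * (C * \<bar>y - s\<bar> powr (e - 1))" .
  qed auto
qed

lemma ai_reg: "(\<lambda>y. poly p y * w y) absolutely_integrable_on {0..1}"
proof -
  obtain M where M: "M \<ge> 0" "\<And>y. y \<in> {0..1} \<Longrightarrow> \<bar>poly p y\<bar> \<le> M" using poly_bounded01 by blast
  show ?thesis
  proof (rule measurable_bounded_by_integrable_imp_absolutely_integrable)
    show "(\<lambda>y. poly p y * w y) \<in> borel_measurable (lebesgue_on {0..1})"
      unfolding weight_def heaviside_def by (rule borel_lebesgue_on) measurable
    show "(\<lambda>y::real. M * C) integrable_on {0..1}" by (intro integrable_continuous_interval continuous_intros)
    fix y :: real assume y: "y \<in> {0..1}"
    have "norm (poly p y * w y) = \<bar>poly p y\<bar> * \<bar>w y\<bar>" by (simp add: abs_mult)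
    also have "\<dots> \<le> M * C" using M y w_bound by (intro mult_mono) auto
    finally show "norm (poly p y * w y) \<le> M * C" .
  qed auto
qed

end


definition si :: "(real \<Rightarrow> real) \<Rightarrow> bool" where
  "si g \<longleftrightarrow> set_integrable lborel {0..1::real} g"

lemma si_of_ai:
  assumes m: "g \<in> borel_measurable borel" and i: "g absolutely_integrable_on {0..1}"
  shows "si g"
proof -
  have "integrable lebesgue (\<lambda>x. indicat_real {0..1} x *\<^sub>R g x)"
    using i by (simp add: set_integrable_def)
  then have "integrable lborel (\<lambda>x. indicat_real {0..1} x *\<^sub>R g x)"
    by (subst (asm) integrable_completion) (use m in measurable)
  then show ?thesis by (simp add: set_integrable_def si_def)
qed

lemma int01_add: "si f \<Longrightarrow> si g \<Longrightarrow> int01 (\<lambda>y. f y + g y) = int01 f + int01 g"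
  unfolding si_def int01_def by (rule set_integral_add(2))

lemma int01_diff: "si f \<Longrightarrow> si g \<Longrightarrow> int01 (\<lambda>y. f y - g y) = int01 f - int01 g"
  unfolding si_def int01_def by (rule set_integral_diff(2))

lemma si_add: "si f \<Longrightarrow> si g \<Longrightarrow> si (\<lambda>y. f y + g y)"
  unfolding si_def by (rule set_integral_add(1))

lemma si_cmult: "si f \<Longrightarrow> si (\<lambda>y. c * f y)"
  unfolding si_def by auto

lemma int01_cmult: "int01 (\<lambda>y. c * f y) = c * int01 f"
  unfolding int01_def by simp

lemma int01_cong: "(\<And>y. y \<in> {0..1} \<Longrightarrow> f y = g y) \<Longrightarrow> int01 f = int01 g"
  unfolding int01_def by (rule set_lebesgue_integral_cong) auto

lemma int01_zero: "int01 (\<lambda>y. 0) = 0"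
  unfolding int01_def by simp

context setting
begin

lemma si_reg: "si (\<lambda>y. poly p y * w y)"
  by (rule si_of_ai[OF _ ai_reg]) (unfold weight_def heaviside_def, measurable)

lemma si_sing:
  assumes s: "(s = 0 \<and> e = al) \<or> (s = 1 \<and> e = be) \<or> (s = t \<and> e = ga)"
  shows "si (\<lambda>y. poly p y * w y / (y - s))"
  by (rule si_of_ai[OF _ ai_sing[OF s]]) (unfold weight_def heaviside_def, measurable)

lemma decomp:
  assumes ws: "w s = 0" and sing: "\<And>p. si (\<lambda>y. poly p y * w y / (y - s))"
  shows "int01 (\<lambda>y. poly f y * poly g y * w y / (y - s)) =
         poly g s * int01 (\<lambda>y. poly f y * w y / (y - s)) +
         int01 (\<lambda>y. poly f y * poly (synthetic_div g s) y * w y)"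
proof -
  have pg: "poly g y = (y - s) * poly (synthetic_div g s) y + poly g s" for y
  proof -
    have "poly g y = poly ([:-s, 1:] * synthetic_div g s + [:poly g s:]) y"
      by (simp only: synthetic_div_correct')
    then show ?thesis by (simp add: algebra_simps)
  qed
  have "int01 (\<lambda>y. poly f y * poly g y * w y / (y - s)) =
        int01 (\<lambda>y. poly g s * (poly f y * w y / (y - s)) + poly (f * synthetic_div g s) y * w y)"
  proof (rule int01_cong)
    fix y :: real
    show "poly f y * poly g y * w y / (y - s) =
          poly g s * (poly f y * w y / (y - s)) + poly (f * synthetic_div g s) y * w y"
    proof (cases "y = s")
      case True then show ?thesis using ws by simp
    next
      case False
      then show ?thesis by (subst pg) (simp add: field_simps)
    qed
  qed
  also have "\<dots> = poly g s * int01 (\<lambda>y. poly f y * w y / (y - s)) + int01 (\<lambda>y. poly (f * synthetic_div g s) y * w y)"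
    using int01_add[OF si_cmult[OF sing[of f]] si_reg[of "f * synthetic_div g s"]]
    by (simp only: int01_cmult)
  finally show ?thesis by (simp add: mult.assoc)
qed

end

lemma degree_lt_aux:
  fixes p :: "real poly"
  assumes "degree p \<le> d" "coeff p d = 0" "p \<noteq> 0"
  shows "degree p < d"
  using assms by (metis le_neq_implies_less leading_coeff_0_iff)

lemma synth_lead:
  fixes p :: "real poly"
  assumes "degree p \<ge> 1"
  shows "degree (synthetic_div p c) = degree p - 1" "lead_coeff (synthetic_div p c) = lead_coeff p"
proof -
  let ?S = "synthetic_div p c"
  show d: "degree ?S = degree p - 1" by (rule degree_synthetic_div)
  have "p = [:-c, 1:] * ?S + [:poly p c:]" by (simp only: synthetic_div_correct')
  also have "\<dots> = smult (-c) ?S + pCons 0 ?S + [:poly p c:]"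
    by (simp add: mult_pCons_left)
  finally have "coeff p (degree p) = coeff (smult (-c) ?S + pCons 0 ?S + [:poly p c:]) (degree p)"
    by simp
  also have "\<dots> = coeff ?S (degree p - 1)"
  proof -
    have "coeff ?S (degree p) = 0" using d assms by (intro coeff_eq_0) auto
    moreover have "coeff (pCons 0 ?S) (degree p) = coeff ?S (degree p - 1)"
      using assms by (cases "degree p") auto
    moreover have "coeff [:poly p c:] (degree p) = 0" using assms by (cases "degree p") auto
    ultimately show ?thesis by simp
  qed
  finally show "lead_coeff ?S = lead_coeff p" using d by simp
qed


context setting begin

lemma ip_split:
  "int01 (\<lambda>y. poly f y * poly (smult c g + r) y * w y) =
   c * int01 (\<lambda>y. poly f y * poly g y * w y) + int01 (\<lambda>y. poly f y * poly r y * w y)"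
proof -
  have "int01 (\<lambda>y. poly f y * poly (smult c g + r) y * w y) =
        int01 (\<lambda>y. c * (poly (f * g) y * w y) + poly (f * r) y * w y)"
    by (rule int01_cong) (simp add: algebra_simps)
  also have "\<dots> = c * int01 (\<lambda>y. poly (f * g) y * w y) + int01 (\<lambda>y. poly (f * r) y * w y)"
    using int01_add[OF si_cmult[OF si_reg[of "f * g"]] si_reg[of "f * r"]]
    by (simp only: int01_cmult)
  finally show ?thesis by simp
qed

end

locale orthsys = setting +
  fixes P :: "nat \<Rightarrow> real poly"
  assumes orth: "monic_orthogonal (weight al be ga A B t) P"
begin

lemma degP[simp]: "degree (P n) = n"
  using orth unfolding monic_orthogonal_def by auto

lemma leadP0: "lead_coeff (P n) = 1"
  using orth unfolding monic_orthogonal_def by blast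

lemma coeffP[simp]: "coeff (P n) n = 1"
  using leadP0[of n] by simp

lemma leadP[simp]: "lead_coeff (P n) = 1" by simp

lemma P_nz[simp]: "P n \<noteq> 0"
proof
  assume "P n = 0"
  then have "lead_coeff (P n) = 0" by simp
  then show False using leadP0[of n] by simp
qed

lemma orthP: "m \<noteq> n \<Longrightarrow> int01 (\<lambda>y. poly (P m) y * poly (P n) y * w y) = 0"
  using orth unfolding monic_orthogonal_def by auto

abbreviation h where "h \<equiv> hnorm w P"

lemma h_def': "h n = int01 (\<lambda>y. poly (P n) y * poly (P n) y * w y)"
  unfolding hnorm_def by (simp add: power2_eq_square)

lemma ip_low: "degree q < n \<Longrightarrow> int01 (\<lambda>y. poly (P n) y * poly q y * w y) = 0"
proof (induction "degree q" arbitrary: q rule: less_induct)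
  case less
  show ?case
  proof (cases "q = 0")
    case True then show ?thesis by (simp add: int01_zero)
  next
    case False
    define d where "d = degree q"
    define c where "c = lead_coeff q"
    define q' where "q' = q - smult c (P d)"
    have q: "q = smult c (P d) + q'" by (simp add: q'_def)
    have "int01 (\<lambda>y. poly (P n) y * poly q y * w y) =
          c * int01 (\<lambda>y. poly (P n) y * poly (P d) y * w y) + int01 (\<lambda>y. poly (P n) y * poly q' y * w y)"
      by (subst q) (rule ip_split)
    also have "int01 (\<lambda>y. poly (P n) y * poly (P d) y * w y) = 0"
      using orthP[of n d] less.prems by (simp add: d_def)
    also have "int01 (\<lambda>y. poly (P n) y * poly q' y * w y) = 0"
    proof (cases "q' = 0")
      case True then show ?thesis by (simp add: int01_zero)
    next
      case False
      have "degree q' \<le> d" unfolding q'_def d_def by (simp add: degree_diff_le)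
      moreover have "coeff q' d = 0" unfolding q'_def c_def d_def by simp
      ultimately have "degree q' < degree q" using degree_lt_aux[OF _ _ False] by (simp add: d_def)
      then show ?thesis using less.hyps less.prems by simp
    qed
    finally show ?thesis by simp
  qed
qed

lemma ip_top: "degree q = n \<Longrightarrow> int01 (\<lambda>y. poly (P n) y * poly q y * w y) = lead_coeff q * h n"
proof -
  assume dq: "degree q = n"
  define c where "c = lead_coeff q"
  define q' where "q' = q - smult c (P n)"
  have q: "q = smult c (P n) + q'" by (simp add: q'_def)
  have "int01 (\<lambda>y. poly (P n) y * poly q y * w y) =
        c * int01 (\<lambda>y. poly (P n) y * poly (P n) y * w y) + int01 (\<lambda>y. poly (P n) y * poly q' y * w y)"
    by (subst q) (rule ip_split)
  also have "int01 (\<lambda>y. poly (P n) y * poly q' y * w y) = 0"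
  proof (cases "q' = 0")
    case True then show ?thesis by (simp add: int01_zero)
  next
    case False
    have "degree q' \<le> n" unfolding q'_def using dq by (simp add: degree_diff_le)
    moreover have "coeff q' n = 0" unfolding q'_def c_def using dq by simp
    ultimately have "degree q' < n" using degree_lt_aux[OF _ _ False] by simp
    then show ?thesis by (rule ip_low)
  qed
  finally show ?thesis by (simp add: h_def' c_def)
qed


lemma b_rel:
  assumes r: "[:0, 1:] * P n = P (Suc n) + smult a (P n) + smult b (P (n - 1))" and n: "n \<ge> 1"
  shows "b * h (n - 1) = h n"
proof -
  have "int01 (\<lambda>y. poly (P (n - 1)) y * poly ([:0, 1:] * P n) y * w y) =
        int01 (\<lambda>y. poly (P n) y * poly ([:0, 1:] * P (n - 1)) y * w y)"
    by (rule int01_cong) (simp add: algebra_simps)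
  also have "\<dots> = lead_coeff ([:0, 1:] * P (n - 1)) * h n"
    by (rule ip_top) (use n in \<open>simp add: degree_mult_eq\<close>)
  also have "lead_coeff ([:0, 1:] * P (n - 1)) = 1" by (simp add: lead_coeff_mult)
  finally have 1: "int01 (\<lambda>y. poly (P (n - 1)) y * poly ([:0, 1:] * P n) y * w y) = h n" by simp
  have "[:0, 1:] * P n = smult b (P (n - 1)) + (smult a (P n) + P (Suc n))" using r by simp
  then have "int01 (\<lambda>y. poly (P (n - 1)) y * poly ([:0, 1:] * P n) y * w y) =
     b * int01 (\<lambda>y. poly (P (n - 1)) y * poly (P (n - 1)) y * w y) +
     (a * int01 (\<lambda>y. poly (P (n - 1)) y * poly (P n) y * w y) +
      int01 (\<lambda>y. poly (P (n - 1)) y * poly (P (Suc n)) y * w y))"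
    by (simp only: ip_split)
  also have "\<dots> = b * h (n - 1)" using n by (simp add: orthP h_def')
  finally show ?thesis using 1 by simp
qed

context
  fixes s :: real
  assumes ws: "w s = 0" and sing: "\<And>p. si (\<lambda>y. poly p y * w y / (y - s))"
begin

definition E where "E n = int01 (\<lambda>y. poly (P n) y * w y / (y - s))"

lemma K2: "int01 (\<lambda>y. (poly (P n) y)^2 * w y / (y - s)) = poly (P n) s * E n"
proof -
  have "int01 (\<lambda>y. (poly (P n) y)^2 * w y / (y - s)) = int01 (\<lambda>y. poly (P n) y * poly (P n) y * w y / (y - s))"
    by (simp add: power2_eq_square)
  also have "\<dots> = poly (P n) s * E n + int01 (\<lambda>y. poly (P n) y * poly (synthetic_div (P n) s) y * w y)"
    unfolding E_def by (rule decomp[OF ws sing])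
  also have "int01 (\<lambda>y. poly (P n) y * poly (synthetic_div (P n) s) y * w y) = 0"
  proof (cases "n = 0")
    case True
    then have "synthetic_div (P n) s = 0" by (simp add: synthetic_div_eq_0_iff)
    then show ?thesis by (simp add: int01_zero)
  next
    case False
    then show ?thesis by (intro ip_low) (simp add: degree_synthetic_div)
  qed
  finally show ?thesis by simp
qed

lemma K11a: "n \<ge> 1 \<Longrightarrow> int01 (\<lambda>y. poly (P n) y * poly (P (n - 1)) y * w y / (y - s)) = poly (P (n - 1)) s * E n"
proof -
  assume n: "n \<ge> 1"
  have "int01 (\<lambda>y. poly (P n) y * poly (P (n - 1)) y * w y / (y - s)) =
        poly (P (n - 1)) s * E n + int01 (\<lambda>y. poly (P n) y * poly (synthetic_div (P (n - 1)) s) y * w y)"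
    unfolding E_def by (rule decomp[OF ws sing])
  also have "int01 (\<lambda>y. poly (P n) y * poly (synthetic_div (P (n - 1)) s) y * w y) = 0"
    using n by (intro ip_low) (simp add: degree_synthetic_div)
  finally show ?thesis by simp
qed

lemma K11b: "n \<ge> 1 \<Longrightarrow> int01 (\<lambda>y. poly (P n) y * poly (P (n - 1)) y * w y / (y - s)) = poly (P n) s * E (n - 1) + h (n - 1)"
proof -
  assume n: "n \<ge> 1"
  have "int01 (\<lambda>y. poly (P n) y * poly (P (n - 1)) y * w y / (y - s)) =
        int01 (\<lambda>y. poly (P (n - 1)) y * poly (P n) y * w y / (y - s))"
    by (rule int01_cong) (simp add: algebra_simps)
  also have "\<dots> = poly (P n) s * E (n - 1) + int01 (\<lambda>y. poly (P (n - 1)) y * poly (synthetic_div (P n) s) y * w y)"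
    unfolding E_def by (rule decomp[OF ws sing])
  also have "int01 (\<lambda>y. poly (P (n - 1)) y * poly (synthetic_div (P n) s) y * w y) =
     lead_coeff (synthetic_div (P n) s) * h (n - 1)"
    using n by (intro ip_top) (simp add: degree_synthetic_div)
  also have "lead_coeff (synthetic_div (P n) s) = 1"
    using synth_lead(2)[of "P n" s] n by simp
  finally show ?thesis by simp
qed

lemma Kprod:
  assumes n: "n \<ge> 1"
  shows "int01 (\<lambda>y. (poly (P n) y)^2 * w y / (y - s)) * int01 (\<lambda>y. (poly (P (n - 1)) y)^2 * w y / (y - s)) =
    int01 (\<lambda>y. poly (P n) y * poly (P (n - 1)) y * w y / (y - s)) *
    (int01 (\<lambda>y. poly (P n) y * poly (P (n - 1)) y * w y / (y - s)) - h (n - 1))"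
proof -
  have "int01 (\<lambda>y. poly (P n) y * poly (P (n - 1)) y * w y / (y - s)) - h (n - 1) = poly (P n) s * E (n - 1)"
    using K11b[OF n] by simp
  then show ?thesis using K2[of n] K2[of "n - 1"] K11a[OF n] by simp
qed

end

end



lemma powr_m1: "(x::real) > 0 \<Longrightarrow> x powr (a - 1) = x powr a / x"
  by (simp add: powr_diff)

lemma alg_left:
  fixes pd pf K a b c y u v al be ga :: real
  assumes "y \<noteq> 0" "u \<noteq> 0" "v \<noteq> 0"
  shows "pd*(K*(a*b*c)) + pf*(K*((al*(a/y)*1*b + a*(be*(b/u)*(0-1)))*c + a*b*(ga*(c/v)*(0-1)))) =
    pd*(K*(a*b*c)) + (al*(pf*(K*(a*b*c))/(y-0)) + be*(pf*(K*(a*b*c))/(-u)) + ga*(pf*(K*(a*b*c))/(-v)))"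
  using assms by (simp add: field_simps)
lemma alg_right:
  fixes pd pf K a b c y u v al be ga :: real
  assumes "y \<noteq> 0" "u \<noteq> 0" "v \<noteq> 0"
  shows "pd*(K*(a*b*c)) + pf*(K*((al*(a/y)*1*b + a*(be*(b/u)*(0-1)))*c + a*b*(ga*(c/v)*(1-0)))) =
    pd*(K*(a*b*c)) + (al*(pf*(K*(a*b*c))/(y-0)) + be*(pf*(K*(a*b*c))/(-u)) + ga*(pf*(K*(a*b*c))/v))"
  using assms by (simp add: field_simps)

context setting begin

definition G where "G f y = poly (pderiv f) y * w y + (al * (poly f y * w y / (y - 0)) +
   be * (poly f y * w y / (y - 1)) + ga * (poly f y * w y / (y - t)))"

lemma G_left: "(G f has_integral 0) {0..t}"
proof -
  define F where "F y = poly f y * (A * (y powr al * (1 - y) powr be * (t - y) powr ga))" for y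
  have "(G f has_integral (F t - F 0)) {0..t}"
  proof (rule fundamental_theorem_of_calculus_interior)
    show "0 \<le> t" using t0 by simp
    show "continuous_on {0..t} F"
      unfolding F_def using al be ga t1
      by (intro continuous_intros continuous_on_powr') auto
    fix y assume y: "y \<in> {0<..<t}"
    then have y0: "0 < y" "y < t" "y < 1" using t1 by auto
    have "(F has_real_derivative
       poly (pderiv f) y * (A * (y powr al * (1 - y) powr be * (t - y) powr ga)) +
       poly f y * (A * ((al * y powr (al - 1) * 1 * (1 - y) powr be + y powr al * (be * (1 - y) powr (be - 1) * (0 - 1))) * (t - y) powr ga
          + y powr al * (1 - y) powr be * (ga * (t - y) powr (ga - 1) * (0 - 1))))) (at y)"
      unfolding F_def using y0
      by (auto intro!: derivative_eq_intros)
    moreover have "poly (pderiv f) y * (A * (y powr al * (1 - y) powr be * (t - y) powr ga)) +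
       poly f y * (A * ((al * y powr (al - 1) * 1 * (1 - y) powr be + y powr al * (be * (1 - y) powr (be - 1) * (0 - 1))) * (t - y) powr ga
          + y powr al * (1 - y) powr be * (ga * (t - y) powr (ga - 1) * (0 - 1)))) = G f y"
    proof -
      have wy: "w y = A * (y powr al * (1 - y) powr be * (t - y) powr ga)"
        unfolding weight_def heaviside_def using y0 by simp
      have d1: "y - 1 = - (1 - y)" and d2: "y - t = - (t - y)" by simp_all
      have p1: "y powr (al - 1) = y powr al / y" and p2: "(1 - y) powr (be - 1) = (1 - y) powr be / (1 - y)"
        and p3: "(t - y) powr (ga - 1) = (t - y) powr ga / (t - y)"
        using y0 by (simp_all add: powr_m1)
      show ?thesis unfolding G_def wy p1 p2 p3 d1 d2
        by (rule alg_left) (use y0 in auto)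
    qed
    ultimately show "(F has_vector_derivative G f y) (at y)"
      by (simp add: has_real_derivative_iff_has_vector_derivative)
  qed
  moreover have "F t - F 0 = 0" unfolding F_def using al ga by simp
  ultimately show ?thesis by simp
qed

lemma G_right: "(G f has_integral 0) {t..1}"
proof -
  define F where "F y = poly f y * ((A + B) * (y powr al * (1 - y) powr be * (y - t) powr ga))" for y
  have "(G f has_integral (F 1 - F t)) {t..1}"
  proof (rule fundamental_theorem_of_calculus_interior)
    show "t \<le> 1" using t1 by simp
    show "continuous_on {t..1} F"
      unfolding F_def using al be ga t0
      by (intro continuous_intros continuous_on_powr') auto
    fix y assume y: "y \<in> {t<..<1}"
    then have y0: "0 < y" "t < y" "y < 1" using t0 by auto
    have "(F has_real_derivative
       poly (pderiv f) y * ((A + B) * (y powr al * (1 - y) powr be * (y - t) powr ga)) +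
       poly f y * ((A + B) * ((al * y powr (al - 1) * 1 * (1 - y) powr be + y powr al * (be * (1 - y) powr (be - 1) * (0 - 1))) * (y - t) powr ga
          + y powr al * (1 - y) powr be * (ga * (y - t) powr (ga - 1) * (1 - 0))))) (at y)"
      unfolding F_def using y0
      by (auto intro!: derivative_eq_intros)
    moreover have "poly (pderiv f) y * ((A + B) * (y powr al * (1 - y) powr be * (y - t) powr ga)) +
       poly f y * ((A + B) * ((al * y powr (al - 1) * 1 * (1 - y) powr be + y powr al * (be * (1 - y) powr (be - 1) * (0 - 1))) * (y - t) powr ga
          + y powr al * (1 - y) powr be * (ga * (y - t) powr (ga - 1) * (1 - 0)))) = G f y"
    proof -
      have wy: "w y = (A + B) * (y powr al * (1 - y) powr be * (y - t) powr ga)"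
        unfolding weight_def heaviside_def using y0 by simp
      have d1: "y - 1 = - (1 - y)" by simp
      have p1: "y powr (al - 1) = y powr al / y" and p2: "(1 - y) powr (be - 1) = (1 - y) powr be / (1 - y)"
        and p3: "(y - t) powr (ga - 1) = (y - t) powr ga / (y - t)"
        using y0 by (simp_all add: powr_m1)
      show ?thesis unfolding G_def wy p1 p2 p3 d1
        by (rule alg_right) (use y0 in auto)
    qed
    ultimately show "(F has_vector_derivative G f y) (at y)"
      by (simp add: has_real_derivative_iff_has_vector_derivative)
  qed
  moreover have "F 1 - F t = 0" unfolding F_def using be ga by simp
  ultimately show ?thesis by simp
qed

lemma ibp:
  "int01 (\<lambda>y. poly (pderiv f) y * w y) + al * int01 (\<lambda>y. poly f y * w y / (y - 0))
   + be * int01 (\<lambda>y. poly f y * w y / (y - 1)) + ga * int01 (\<lambda>y. poly f y * w y / (y - t)) = 0"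
proof -
  have s0: "si (\<lambda>y. poly f y * w y / (y - 0))" by (rule si_sing[where e=al]) simp
  have s1: "si (\<lambda>y. poly f y * w y / (y - 1))" by (rule si_sing[where e=be]) simp
  have st: "si (\<lambda>y. poly f y * w y / (y - t))" by (rule si_sing[where e=ga]) simp
  have sp: "si (\<lambda>y. poly (pderiv f) y * w y)" by (rule si_reg)
  have sG: "si (G f)" unfolding G_def
    by (intro si_add si_cmult s0 s1 st sp)
  have "(G f has_integral (0 + 0)) {0..1}"
    by (rule has_integral_combine[OF _ _ G_left G_right]) (use t0 t1 in auto)
  then have "integral {0..1} (G f) = 0" by (simp add: integral_unique)
  moreover have "int01 (G f) = integral {0..1} (G f)"
    using sG unfolding si_def int01_def by (rule set_borel_integral_eq_integral(2))
  moreover have "int01 (G f) = int01 (\<lambda>y. poly (pderiv f) y * w y) + (al * int01 (\<lambda>y. poly f y * w y / (y - 0))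
   + be * int01 (\<lambda>y. poly f y * w y / (y - 1)) + ga * int01 (\<lambda>y. poly f y * w y / (y - t)))"
  proof -
    have "int01 (G f) = int01 (\<lambda>y. poly (pderiv f) y * w y) + int01 (\<lambda>y. al * (poly f y * w y / (y - 0)) +
       be * (poly f y * w y / (y - 1)) + ga * (poly f y * w y / (y - t)))"
      unfolding G_def by (rule int01_add; intro si_add si_cmult s0 s1 st sp)
    also have "int01 (\<lambda>y. al * (poly f y * w y / (y - 0)) +
       be * (poly f y * w y / (y - 1)) + ga * (poly f y * w y / (y - t))) =
       int01 (\<lambda>y. al * (poly f y * w y / (y - 0)) + be * (poly f y * w y / (y - 1)))
       + int01 (\<lambda>y. ga * (poly f y * w y / (y - t)))"
      by (rule int01_add; intro si_add si_cmult s0 s1 st sp)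
    also have "int01 (\<lambda>y. al * (poly f y * w y / (y - 0)) + be * (poly f y * w y / (y - 1))) =
       int01 (\<lambda>y. al * (poly f y * w y / (y - 0))) + int01 (\<lambda>y. be * (poly f y * w y / (y - 1)))"
      by (rule int01_add; intro si_add si_cmult s0 s1 st sp)
    finally show ?thesis by (simp only: int01_cmult)
  qed
  ultimately show ?thesis by (simp add: add.assoc)
qed

end

context orthsys begin

lemma pos_interval: obtains a b where "a < b" "\<And>y. a < y \<Longrightarrow> y < b \<Longrightarrow> y \<in> {0..1} \<and> w y > 0"
proof (cases "A > 0")
  case True
  show ?thesis
  proof (rule that[of 0 t])
    show "0 < t" by (rule t0)
    fix y :: real assume y: "0 < y" "y < t"
    then show "y \<in> {0..1} \<and> w y > 0" using t1 True
      unfolding weight_def heaviside_def by auto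
  qed
next
  case False
  then have AB': "A + B > 0" using A AB nz by auto
  show ?thesis
  proof (rule that[of t 1])
    show "t < 1" by (rule t1)
    fix y :: real assume y: "t < y" "y < 1"
    then show "y \<in> {0..1} \<and> w y > 0" using t0 AB'
      unfolding weight_def heaviside_def by auto
  qed
qed

lemma h_pos: "0 < h n"
proof -
  let ?g = "\<lambda>y. (poly (P n) y)^2 * w y"
  have "si (\<lambda>y. poly (P n * P n) y * w y)" by (rule si_reg)
  then have si: "set_integrable lborel {0..1} ?g" unfolding si_def by (simp add: power2_eq_square)
  then have int: "integrable lborel (\<lambda>x. indicator {0..1} x *\<^sub>R ?g x)" by (simp add: set_integrable_def)
  have nn: "AE x in lborel. 0 \<le> indicator {0..1} x *\<^sub>R ?g x"
    using w_nonneg by (auto simp: indicator_def)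
  have hn: "h n = integral\<^sup>L lborel (\<lambda>x. indicator {0..1} x *\<^sub>R ?g x)"
    unfolding hnorm_def int01_def set_lebesgue_integral_def by simp
  have "h n \<ge> 0" unfolding hn using nn by (intro integral_nonneg_AE) auto
  show ?thesis
  proof (rule ccontr)
    assume "\<not> 0 < h n"
    then have "h n = 0" using \<open>h n \<ge> 0\<close> by simp
    then have AE0: "AE x in lborel. indicator {0..1} x *\<^sub>R ?g x = 0"
      using integral_nonneg_eq_0_iff_AE[OF int nn] hn by simp
    obtain a b where ab: "a < b" "\<And>y. a < y \<Longrightarrow> y < b \<Longrightarrow> y \<in> {0..1} \<and> w y > 0"
      using pos_interval by blast
    have "{x. poly (P n) x = 0} \<in> null_sets lborel"
      by (intro finite_imp_null_set_lborel poly_roots_finite) simp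
    then have AEZ: "AE x in lborel. x \<notin> {x. poly (P n) x = 0}" by (rule AE_not_in)
    have "AE x in lborel. x \<notin> {a<..<b}"
      using AE0 AEZ
    proof eventually_elim
      case (elim x)
      show ?case
      proof
        assume x: "x \<in> {a<..<b}"
        then have "x \<in> {0..1}" "w x > 0" using ab(2)[of x] by auto
        moreover have "poly (P n) x \<noteq> 0" using elim(2) by simp
        ultimately have "indicator {0..1} x *\<^sub>R ?g x > 0" by simp
        with elim(1) show False by linarith
      qed
    qed
    then have "emeasure lborel {a<..<b} = 0"
      by (subst (asm) AE_iff_measurable[where N="{a<..<b}"]) auto
    then show False using ab(1) by simp
  qed
qed

end



context orthsys begin

lemma ibp_sq: "int01 (\<lambda>y. poly (pderiv (P m * P m)) y * w y) = 0"
proof -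
  have "int01 (\<lambda>y. poly (pderiv (P m * P m)) y * w y) =
        int01 (\<lambda>y. poly (P m) y * poly (smult 2 (pderiv (P m))) y * w y)"
    by (rule int01_cong) (simp add: pderiv_mult algebra_simps)
  also have "\<dots> = 0"
  proof (cases "m = 0")
    case True
    then have "pderiv (P m) = 0" by (simp add: pderiv_eq_0_iff)
    then show ?thesis by (simp add: int01_zero)
  next
    case False
    then show ?thesis by (intro ip_low) (simp add: degree_pderiv)
  qed
  finally show ?thesis .
qed

lemma lead_pderiv: "n \<ge> 1 \<Longrightarrow> lead_coeff (pderiv (P n)) = real n"
proof -
  assume n: "n \<ge> 1"
  have "degree (pderiv (P n)) = n - 1" by (simp add: degree_pderiv)
  moreover have "coeff (pderiv (P n)) (n - 1) = real n"
    using n by (simp add: coeff_pderiv)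
  ultimately show ?thesis by simp
qed

lemma ibp_mix: "n \<ge> 1 \<Longrightarrow> int01 (\<lambda>y. poly (pderiv (P n * P (n - 1))) y * w y) = real n * h (n - 1)"
proof -
  assume n: "n \<ge> 1"
  have "int01 (\<lambda>y. poly (pderiv (P n * P (n - 1))) y * w y) =
        int01 (\<lambda>y. poly (P n * pderiv (P (n - 1))) y * w y + poly (P (n - 1) * pderiv (P n)) y * w y)"
    by (rule int01_cong) (simp add: pderiv_mult algebra_simps)
  also have "\<dots> = int01 (\<lambda>y. poly (P n * pderiv (P (n - 1))) y * w y) + int01 (\<lambda>y. poly (P (n - 1) * pderiv (P n)) y * w y)"
    by (rule int01_add; rule si_reg)
  also have "int01 (\<lambda>y. poly (P n * pderiv (P (n - 1))) y * w y) = 0"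
  proof -
    have "int01 (\<lambda>y. poly (P n * pderiv (P (n - 1))) y * w y) = int01 (\<lambda>y. poly (P n) y * poly (pderiv (P (n - 1))) y * w y)"
      by simp
    also have "\<dots> = 0" using n by (intro ip_low) (simp add: degree_pderiv)
    finally show ?thesis .
  qed
  also have "int01 (\<lambda>y. poly (P (n - 1) * pderiv (P n)) y * w y) = real n * h (n - 1)"
  proof -
    have "int01 (\<lambda>y. poly (P (n - 1) * pderiv (P n)) y * w y) = int01 (\<lambda>y. poly (P (n - 1)) y * poly (pderiv (P n)) y * w y)"
      by simp
    also have "\<dots> = lead_coeff (pderiv (P n)) * h (n - 1)" using n by (intro ip_top) (simp add: degree_pderiv)
    finally show ?thesis using lead_pderiv[OF n] by simp
  qed
  finally show ?thesis by simp
qed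

lemma sing0: "si (\<lambda>y. poly p y * w y / (y - 0))" by (rule si_sing[where e=al]) simp
lemma sing1: "si (\<lambda>y. poly p y * w y / (y - 1))" by (rule si_sing[where e=be]) simp
lemma singt: "si (\<lambda>y. poly p y * w y / (y - t))" by (rule si_sing[where e=ga]) simp

lemma ibp_q:
  "int01 (\<lambda>y. poly (pderiv (f * g)) y * w y) + al * int01 (\<lambda>y. poly f y * poly g y * w y / (y - 0))
   + be * int01 (\<lambda>y. poly f y * poly g y * w y / (y - 1)) + ga * int01 (\<lambda>y. poly f y * poly g y * w y / (y - t)) = 0"
  using ibp[of "f * g"] by simp

lemma flip1: "int01 (\<lambda>y. g y / (1 - y)) = - int01 (\<lambda>y. g y / (y - 1))"
proof -
  have "int01 (\<lambda>y. g y / (1 - y)) = int01 (\<lambda>y. (-1) * (g y / (y - 1)))"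
    by (rule int01_cong) (auto simp: divide_simps algebra_simps)
  then show ?thesis by (simp only: int01_cmult)
qed

lemma main:
  assumes n: "n \<ge> 1" and r: "[:0, 1:] * P n = P (Suc n) + smult a (P n) + smult b (P (n - 1))"
  shows "b * Rseq be w P n * Rseq be w P (n - 1) = (rseq be w P n)^2 + be * rseq be w P n
       \<and> b * xseq al w P n * xseq al w P (n - 1) = (yseq al w P n)^2 - al * yseq al w P n
       \<and> b * (Rseq be w P n * xseq al w P (n - 1) + xseq al w P n * Rseq be w P (n - 1))
           = 2 * rseq be w P n * yseq al w P n + (2 * real n + be + ga) * rseq be w P n
             - (2 * real n + al + ga) * yseq al w P n - real n * (real n + ga)"
proof -
  define H where "H = h (n - 1)"
  have Hp: "H > 0" unfolding H_def by (rule h_pos)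
  have Hn: "h n = b * H" unfolding H_def using b_rel[OF r n] by simp
  have hnp: "h n > 0" by (rule h_pos)
  define X2n where "X2n = int01 (\<lambda>y. (poly (P n) y)^2 * w y / (y - 0))"
  define X2m where "X2m = int01 (\<lambda>y. (poly (P (n - 1)) y)^2 * w y / (y - 0))"
  define X11 where "X11 = int01 (\<lambda>y. poly (P n) y * poly (P (n - 1)) y * w y / (y - 0))"
  define Y2n where "Y2n = int01 (\<lambda>y. (poly (P n) y)^2 * w y / (y - 1))"
  define Y2m where "Y2m = int01 (\<lambda>y. (poly (P (n - 1)) y)^2 * w y / (y - 1))"
  define Y11 where "Y11 = int01 (\<lambda>y. poly (P n) y * poly (P (n - 1)) y * w y / (y - 1))"
  define Z2n where "Z2n = int01 (\<lambda>y. (poly (P n) y)^2 * w y / (y - t))"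
  define Z2m where "Z2m = int01 (\<lambda>y. (poly (P (n - 1)) y)^2 * w y / (y - t))"
  define Z11 where "Z11 = int01 (\<lambda>y. poly (P n) y * poly (P (n - 1)) y * w y / (y - t))"
  have p1: "X2n * X2m = X11 * (X11 - H)"
    unfolding X2n_def X2m_def X11_def H_def by (rule Kprod[OF _ sing0 n]) (simp add: w_zero)
  have p2: "Y2n * Y2m = Y11 * (Y11 - H)"
    unfolding Y2n_def Y2m_def Y11_def H_def by (rule Kprod[OF _ sing1 n]) (simp add: w_zero)
  have p3: "Z2n * Z2m = Z11 * (Z11 - H)"
    unfolding Z2n_def Z2m_def Z11_def H_def by (rule Kprod[OF _ singt n]) (simp add: w_zero)
  have i1: "al * X2n + be * Y2n + ga * Z2n = 0"
    using ibp_q[of "P n" "P n"] ibp_sq[of n] unfolding X2n_def Y2n_def Z2n_def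
    by (simp add: power2_eq_square)
  have i2: "al * X2m + be * Y2m + ga * Z2m = 0"
    using ibp_q[of "P (n - 1)" "P (n - 1)"] ibp_sq[of "n - 1"] unfolding X2m_def Y2m_def Z2m_def
    by (simp add: power2_eq_square)
  have i3: "real n * H + al * X11 + be * Y11 + ga * Z11 = 0"
    using ibp_q[of "P n" "P (n - 1)"] ibp_mix[OF n] unfolding X11_def Y11_def Z11_def H_def
    by simp
  have xn: "xseq al w P n = al / h n * X2n" unfolding xseq_def X2n_def by simp
  have xm: "xseq al w P (n - 1) = al / H * X2m" unfolding xseq_def X2m_def H_def by simp
  have yn: "yseq al w P n = al / H * X11" unfolding yseq_def X11_def H_def by simp
  have Rn: "Rseq be w P n = - (be / h n * Y2n)" unfolding Rseq_def Y2n_def flip1 by simp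
  have Rm: "Rseq be w P (n - 1) = - (be / H * Y2m)" unfolding Rseq_def Y2m_def H_def flip1 by simp
  have rn: "rseq be w P n = - (be / H * Y11)" unfolding rseq_def Y11_def H_def flip1 by simp
  have b: "b = h n / H" using Hn Hp by simp
  have e1: "b * Rseq be w P n * Rseq be w P (n - 1) = be^2 * (Y2n * Y2m) / H^2"
    unfolding Rn Rm b using Hp hnp by (simp add: field_simps power2_eq_square)
  have e2: "b * xseq al w P n * xseq al w P (n - 1) = al^2 * (X2n * X2m) / H^2"
    unfolding xn xm b using Hp hnp by (simp add: field_simps power2_eq_square)
  have e3: "b * (Rseq be w P n * xseq al w P (n - 1) + xseq al w P n * Rseq be w P (n - 1))
      = - (al * be * (Y2n * X2m + X2n * Y2m)) / H^2"
    unfolding Rn Rm xn xm b using Hp hnp by (simp add: field_simps power2_eq_square)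
  have gz: "ga * Z2n = - (al * X2n + be * Y2n)" "ga * Z2m = - (al * X2m + be * Y2m)"
    "ga * Z11 = - (real n * H + al * X11 + be * Y11)"
    using i1 i2 i3 by linarith+
  have "ga^2 * (Z2n * Z2m) = (ga * Z2n) * (ga * Z2m)" by (simp add: power2_eq_square algebra_simps)
  also have "\<dots> = (al * X2n + be * Y2n) * (al * X2m + be * Y2m)" unfolding gz by algebra
  finally have q1: "al * be * (Y2n * X2m + X2n * Y2m) = ga^2 * (Z2n * Z2m) - al^2 * (X2n * X2m) - be^2 * (Y2n * Y2m)"
    by (simp add: power2_eq_square algebra_simps)
  have "ga^2 * (Z11 * (Z11 - H)) = (ga * Z11) * (ga * Z11 - ga * H)" by (simp add: power2_eq_square algebra_simps)
  also have "\<dots> = (real n * H + al * X11 + be * Y11) * (real n * H + al * X11 + be * Y11 + ga * H)"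
    unfolding gz by (simp add: algebra_simps)
  finally have q2: "ga^2 * (Z11 * (Z11 - H)) = (real n * H + al * X11 + be * Y11) * (real n * H + al * X11 + be * Y11 + ga * H)" .
  show ?thesis
  proof (intro conjI)
    show "b * Rseq be w P n * Rseq be w P (n - 1) = (rseq be w P n)^2 + be * rseq be w P n"
      unfolding e1 p2 rn using Hp by (simp add: field_simps power2_eq_square)
    show "b * xseq al w P n * xseq al w P (n - 1) = (yseq al w P n)^2 - al * yseq al w P n"
      unfolding e2 p1 yn using Hp by (simp add: field_simps power2_eq_square)
    show "b * (Rseq be w P n * xseq al w P (n - 1) + xseq al w P n * Rseq be w P (n - 1))
           = 2 * rseq be w P n * yseq al w P n + (2 * real n + be + ga) * rseq be w P n
             - (2 * real n + al + ga) * yseq al w P n - real n * (real n + ga)"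
      unfolding e3 q1 p1 p2 p3 q2 rn yn using Hp by (simp add: field_simps power2_eq_square)
  qed
qed

end

theorem proposition2p5:
  fixes al be ga A B t :: real
    and P :: "nat \<Rightarrow> real poly"
    and a b :: "nat \<Rightarrow> real"
    and n :: nat
  assumes "al > 0" "be > 0" "ga > 0"
    and "A \<ge> 0" "A + B \<ge> 0" "\<not> (A = 0 \<and> A + B = 0)"
    and "0 < t" "t < 1"
    and orth: "monic_orthogonal (weight al be ga A B t) P"
    and rec0: "[:0, 1:] * P 0 = P 1 + smult (a 0) (P 0)"
    and rec: "\<forall>k\<ge>1. [:0, 1:] * P k = P (Suc k) + smult (a k) (P k) + smult (b k) (P (k - 1))"
    and "n \<ge> 1"
  shows "let w = weight al be ga A B t;
             x = xseq al w P; R = Rseq be w P; y = yseq al w P; r = rseq be w P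
         in b n * R n * R (n - 1) = (r n)^2 + be * r n
          \<and> b n * x n * x (n - 1) = (y n)^2 - al * y n
          \<and> b n * (R n * x (n - 1) + x n * R (n - 1))
              = 2 * r n * y n + (2 * real n + be + ga) * r n
                - (2 * real n + al + ga) * y n - real n * (real n + ga)"
proof -
  interpret orthsys al be ga A B t P
    using assms by unfold_locales auto
  have r: "[:0, 1:] * P n = P (Suc n) + smult (a n) (P n) + smult (b n) (P (n - 1))"
    using rec \<open>n \<ge> 1\<close> by blast
  show ?thesis using main[OF \<open>n \<ge> 1\<close> r] by (simp only: Let_def)
qed


end
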